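(* Let $A,Y\in\{0,1\}$ and let $R,R'\in[0,1]$ be random variables on the same probability space, with $\Pr\{A=a,Y=y\}>0$ for all $a,y$. Fix $a\in\{0,1\}$. Then for any point $p$ on the $A$-conditional ROC curve $\{C_a^R(t):t\in[0,1]\}$ of $R$, there is a point $q$ on the corresponding $A$-conditional ROC curve $\{C_a^{R'}(t):t\in[0,1]\}$ of $R'$ such that $\|p-q\|_2\le\sqrt{2}\cdot d_{\mathrm{K}}(R,R')$.
   Context: For a score $S\in[0,1]$ and $a\in\{0,1\}$, the $A$-conditional ROC curve is $C_a^S(t)=\left(\Pr\{S>t\mid A=a,Y=0\},\ \Pr\{S>t\mid A=a,Y=1\}\right)$, $t\in[0,1]$. The conditional Kolmogorov distance is $d_{\mathrm{K}}(R,R')=\max_{a,y\in\{0,1\}}\sup_{t\in[0,1]}\left|\Pr\{R>t\mid A=a,Y=y\}-\Pr\{R'>t\mid A=a,Y=y\}\right|$. *)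

theory Defs
  imports "HOL-Probability.Probability"
begin

definition cond_surv ::
  "'w measure \<Rightarrow> ('w \<Rightarrow> nat) \<Rightarrow> ('w \<Rightarrow> nat) \<Rightarrow> ('w \<Rightarrow> real) \<Rightarrow> nat \<Rightarrow> nat \<Rightarrow> real \<Rightarrow> real" where
  "cond_surv M A Y S a y t =
     measure M {w \<in> space M. S w > t \<and> A w = a \<and> Y w = y} /
     measure M {w \<in> space M. A w = a \<and> Y w = y}"

definition cond_roc ::
  "'w measure \<Rightarrow> ('w \<Rightarrow> nat) \<Rightarrow> ('w \<Rightarrow> nat) \<Rightarrow> ('w \<Rightarrow> real) \<Rightarrow> nat \<Rightarrow> real \<Rightarrow> real \<times> real" where
  "cond_roc M A Y S a t = (cond_surv M A Y S a 0 t, cond_surv M A Y S a 1 t)"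

definition cond_kolmogorov ::
  "'w measure \<Rightarrow> ('w \<Rightarrow> nat) \<Rightarrow> ('w \<Rightarrow> nat) \<Rightarrow> ('w \<Rightarrow> real) \<Rightarrow> ('w \<Rightarrow> real) \<Rightarrow> real" where
  "cond_kolmogorov M A Y R R' =
     Sup {\<bar>cond_surv M A Y R a y t - cond_surv M A Y R' a y t\<bar> | a y t.
            a \<in> {0,1} \<and> y \<in> {0,1} \<and> t \<in> {0..1}}"

end

theory Submission
  imports Defs
begin

lemma cond_surv_bounds:
  assumes "prob_space M"
    and "A \<in> measurable M (count_space UNIV)" and "Y \<in> measurable M (count_space UNIV)"
    and "S \<in> borel_measurable M"
  shows "0 \<le> cond_surv M A Y S a y t \<and> cond_surv M A Y S a y t \<le> 1"
proof -
  interpret prob_space M by fact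
  have m1: "{w \<in> space M. A w = a \<and> Y w = y} \<in> sets M"
    using assms(2,3) by measurable
  have "{w \<in> space M. S w > t \<and> A w = a \<and> Y w = y} \<subseteq> {w \<in> space M. A w = a \<and> Y w = y}" by auto
  hence le: "measure M {w \<in> space M. S w > t \<and> A w = a \<and> Y w = y} \<le> measure M {w \<in> space M. A w = a \<and> Y w = y}"
    using m1 finite_measure_mono by blast
  show ?thesis unfolding cond_surv_def
    using le by (cases "measure M {w \<in> space M. A w = a \<and> Y w = y} = 0")
      (auto simp: divide_le_eq_1 zero_less_measure_iff)
qed

theorem lemma5p5:
  fixes M :: "'w measure" and A Y :: "'w \<Rightarrow> nat" and R R' :: "'w \<Rightarrow> real"
    and a :: nat and p :: "real \<times> real"
  assumes "prob_space M"
    and "A \<in> measurable M (count_space UNIV)" and "Y \<in> measurable M (count_space UNIV)"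
    and "R \<in> borel_measurable M" and "R' \<in> borel_measurable M"
    and "\<forall>w\<in>space M. A w \<in> {0,1} \<and> Y w \<in> {0,1}"
    and "\<forall>w\<in>space M. R w \<in> {0..1} \<and> R' w \<in> {0..1}"
    and "\<forall>a'\<in>{0,1}. \<forall>y\<in>{0,1}. measure M {w \<in> space M. A w = a' \<and> Y w = y} > 0"
    and "a \<in> {0,1}"
    and "p \<in> cond_roc M A Y R a ` {0..1}"
  shows "\<exists>q \<in> cond_roc M A Y R' a ` {0..1}.
           dist p q \<le> sqrt 2 * cond_kolmogorov M A Y R R'"
proof -
  obtain t where t: "t \<in> {0..1}" and p: "p = cond_roc M A Y R a t" using assms(10) by blast
  define S where "S = {\<bar>cond_surv M A Y R a y t - cond_surv M A Y R' a y t\<bar> | a y t.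
            a \<in> {0,1} \<and> y \<in> {0,1} \<and> t \<in> {0..1}}"
  have bdd: "bdd_above S"
  proof (rule bdd_aboveI[of _ 1])
    fix x assume "x \<in> S"
    then obtain a y t where x: "x = \<bar>cond_surv M A Y R a y t - cond_surv M A Y R' a y t\<bar>"
      unfolding S_def by blast
    have "0 \<le> cond_surv M A Y R a y t \<and> cond_surv M A Y R a y t \<le> 1"
      using cond_surv_bounds assms(1-4) by blast
    moreover have "0 \<le> cond_surv M A Y R' a y t \<and> cond_surv M A Y R' a y t \<le> 1"
      using cond_surv_bounds assms(1-3,5) by blast
    ultimately show "x \<le> 1" using x by auto
  qed
  define d where "d = cond_kolmogorov M A Y R R'"
  have dS: "d = Sup S" unfolding d_def S_def cond_kolmogorov_def by simp
  have e0: "\<bar>cond_surv M A Y R a 0 t - cond_surv M A Y R' a 0 t\<bar> \<le> d"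
    unfolding dS by (rule cSup_upper[OF _ bdd]) (use t assms(9) in \<open>auto simp: S_def\<close>)
  have e1: "\<bar>cond_surv M A Y R a 1 t - cond_surv M A Y R' a 1 t\<bar> \<le> d"
    unfolding dS by (rule cSup_upper[OF _ bdd]) (use t assms(9) in \<open>auto simp: S_def\<close>)
  define x where "x = cond_surv M A Y R a 0 t - cond_surv M A Y R' a 0 t"
  define y where "y = cond_surv M A Y R a 1 t - cond_surv M A Y R' a 1 t"
  have d0: "0 \<le> d" using e0 by linarith
  have "x^2 \<le> d^2" using e0 unfolding x_def by (metis abs_le_square_iff abs_of_nonneg d0 abs_ge_self order_trans power2_abs abs_le_iff)
  moreover have "y^2 \<le> d^2" using e1 unfolding y_def by (metis abs_le_square_iff abs_of_nonneg d0 abs_ge_self order_trans power2_abs abs_le_iff)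
  ultimately have "sqrt (x^2 + y^2) \<le> sqrt (2 * d^2)" by simp
  also have "\<dots> = sqrt 2 * d" using d0 by (simp add: real_sqrt_mult)
  finally have "sqrt (x^2 + y^2) \<le> sqrt 2 * d" .
  moreover have "dist p (cond_roc M A Y R' a t) = sqrt (x^2 + y^2)"
    unfolding p cond_roc_def x_def y_def by (simp add: dist_Pair_Pair dist_real_def)
  ultimately show ?thesis using t unfolding d_def by force
qed

end
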